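(* Consider the pointer procedure described in the context, started with $P_0=22$ and all other pointers uninitiated, and let $R_0=22$ and, for $j\ge1$, let $R_j$ be the content of $P_0$ immediately after the $j$-th call of $\mathrm{Inc}(0)$ has finished. Then the infinite concatenation $R_0R_1R_2\cdots$ equals $K'$, i.e. the sequence $(K_{n+1})_{n\ge1}$ obtained from the classical Kolakoski sequence $K$ by deleting its first symbol.
   Context: $K=(K_n)_{n\ge1}$ denotes the classical Kolakoski sequence: the unique infinite sequence over $\{1,2\}$ with $K_1=1$ whose sequence of run lengths equals $K$ itself. $K'$ is defined by $K=1K'$. Pointer procedure: there are pointers $P_0,P_1,P_2,\dots$; each is either uninitiated or holds a word from $S=\{1,2,11,22\}$. The recursive procedure $\mathrm{Inc}(k)$ acts as follows. (i) If $P_k$ is uninitiated, set $P_k:=22$. (ii) If $k\ge1$ and $P_k$ holds two symbols ($11$ or $22$), delete one symbol (so $11\mapsto1$, $22\mapsto2$) and stop. (iii) Otherwise (i.e. $k=0$, or $k\ge1$ and $P_k$ holds a single symbol), call $\mathrm{Inc}(k+1)$; afterwards let $\ell$ be the first symbol of the word held by $P_{k+1}$ (which is not modified here), let $a$ be the symbol occurring in the word held by $P_k$ before this step, and set $P_k:=\bar a^{\,\ell}$, the word consisting of $\ell$ copies of the symbol $\bar a$, where $\bar1=2$, $\bar2=1$. Initially $P_0=22$ and all $P_k$, $k\ge1$, are uninitiated; $\mathrm{Inc}(0)$ is then called repeatedly. *)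

theory Defs
  imports Main
begin

text \<open>Meaningful when infinitely many of the words are nonempty.\<close>
definition inf_concat :: "(nat \<Rightarrow> 'a list) \<Rightarrow> nat \<Rightarrow> 'a" where
  "inf_concat R m =
     (let j = (LEAST j. m < (\<Sum>i\<le>j. length (R i)))
      in R j ! (m - (\<Sum>i<j. length (R i))))"

text \<open>Kolakoski property, 0-indexed: K i stands for the paper's K_(i+1).\<close>
definition is_kolakoski :: "(nat \<Rightarrow> nat) \<Rightarrow> bool" where
  "is_kolakoski K \<longleftrightarrow> K 0 = 1 \<and> (\<forall>n. K n \<in> {1, 2}) \<and>
     inf_concat (\<lambda>i. replicate (K i) (if even i then 1 else 2)) = K"

text \<open>The classical Kolakoski sequence (0-indexed): kol i = K_(i+1).\<close>
definition kol :: "nat \<Rightarrow> nat" where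
  "kol = (THE K. is_kolakoski K)"

text \<open>Pointer states: P k = None means uninitiated, otherwise P k = Some w with w a word.\<close>
type_synonym pstate = "nat \<Rightarrow> nat list option"

definition flip :: "nat \<Rightarrow> nat" where
  "flip a = (if a = 1 then 2 else 1)"

definition init_step :: "nat \<Rightarrow> pstate \<Rightarrow> pstate" where
  "init_step k P = (case P k of None \<Rightarrow> P(k := Some [2, 2]) | Some _ \<Rightarrow> P)"

text \<open>Big-step semantics of the recursive procedure Inc(k): inc_rel k P P' means that
  calling Inc(k) in state P terminates in state P'.\<close>
inductive inc_rel :: "nat \<Rightarrow> pstate \<Rightarrow> pstate \<Rightarrow> bool" where
  stop: "\<lbrakk> P1 = init_step k P; w = the (P1 k); k \<ge> 1; length w = 2 \<rbrakk>
         \<Longrightarrow> inc_rel k P (P1(k := Some [hd w]))"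
| recur: "\<lbrakk> P1 = init_step k P; w = the (P1 k); \<not> (k \<ge> 1 \<and> length w = 2);
           inc_rel (Suc k) P1 P2; P2 (Suc k) = Some v \<rbrakk>
         \<Longrightarrow> inc_rel k P (P2(k := Some (replicate (hd v) (flip (hd w)))))"

definition P_init :: pstate where
  "P_init = (\<lambda>k. if k = 0 then Some [2, 2] else None)"

definition is_run :: "(nat \<Rightarrow> pstate) \<Rightarrow> bool" where
  "is_run st \<longleftrightarrow> st 0 = P_init \<and> (\<forall>j. inc_rel 0 (st j) (st (Suc j)))"

end

theory Submission
  imports Defs
begin

definition sy :: "nat \<Rightarrow> nat" where "sy i = (if even i then 2 else 1)"

fun pre :: "nat \<Rightarrow> nat list" where
  "pre 0 = []"
| "pre (Suc i) = pre i @ replicate (if i = 0 then 2 else pre i ! i) (sy i)"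

definition ks :: "nat \<Rightarrow> nat" where "ks n = pre (Suc n) ! n"
definition SS :: "nat \<Rightarrow> nat" where "SS r = length (pre r)"

lemma sy_12: "sy i \<in> {1,2}" by (simp add: sy_def)

lemma pre_set_len: "set (pre i) \<subseteq> {1,2} \<and> (i \<ge> 1 \<longrightarrow> i + 1 \<le> length (pre i))"
proof (induction i)
  case 0 then show ?case by simp
next
  case (Suc i)
  show ?case
  proof (cases "i = 0")
    case True then show ?thesis by (simp add: sy_def)
  next
    case False
    then have li: "i < length (pre i)" using Suc by auto
    then have "pre i ! i \<in> {1,2}" using Suc nth_mem by blast
    then show ?thesis using Suc False li sy_12[of i] by auto
  qed
qed

lemma pre_prefix: "n < length (pre i) \<Longrightarrow> pre (i + d) ! n = pre i ! n"
proof (induction d)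
  case 0 then show ?case by simp
next
  case (Suc d)
  have "n < length (pre (i + d))"
  proof -
    have "length (pre i) \<le> length (pre (i + d))"
      by (induction d) auto
    then show ?thesis using Suc by simp
  qed
  then show ?case using Suc by (simp add: nth_append)
qed

lemma len_pre_Suc: "n + 2 \<le> length (pre (Suc n))"
  using pre_set_len[of "Suc n"] by simp

lemma ks_pre: "n < length (pre m) \<Longrightarrow> ks n = pre m ! n"
proof -
  assume a: "n < length (pre m)"
  have b: "n < length (pre (Suc n))" using len_pre_Suc[of n] by simp
  show ?thesis
  proof (cases "m \<le> Suc n")
    case True
    then obtain d where "Suc n = m + d" by (metis le_add_diff_inverse)
    then show ?thesis using pre_prefix[OF a, of d] by (simp add: ks_def)
  next
    case False
    then obtain d where "m = Suc n + d" by (metis le_add_diff_inverse nat_le_linear)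
    then show ?thesis using pre_prefix[OF b, of d] by (simp add: ks_def)
  qed
qed

lemma ks_12: "ks n \<in> {1,2}"
proof -
  have "n < length (pre (Suc n))" using len_pre_Suc[of n] by simp
  then have "pre (Suc n) ! n \<in> set (pre (Suc n))" by (rule nth_mem)
  then show ?thesis using pre_set_len[of "Suc n"] by (auto simp: ks_def)
qed

lemma ks_ge1: "ks n \<ge> 1" using ks_12[of n] by auto
lemma ks_pos: "0 < ks n" using ks_12[of n] by auto
lemma ks_le2: "ks n \<le> 2" using ks_12[of n] by auto

lemma ks_0: "ks 0 = 2" by (simp add: ks_def sy_def)

lemma SS_Suc: "SS (Suc r) = SS r + ks r"
proof (cases "r = 0")
  case True then show ?thesis by (simp add: SS_def ks_0)
next
  case False
  then have "r < length (pre r)" using pre_set_len[of r] by auto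
  then have "pre r ! r = ks r" using ks_pre by simp
  then show ?thesis using False by (simp add: SS_def)
qed

lemma SS_0: "SS 0 = 0" by (simp add: SS_def)
lemma SS_1: "SS (Suc 0) = 2" by (simp add: SS_def sy_def)
lemma SS_ge: "r \<ge> 1 \<Longrightarrow> r + 1 \<le> SS r" using pre_set_len[of r] by (simp add: SS_def)

lemma SS_mono: "a \<le> b \<Longrightarrow> SS a \<le> SS b"
  by (rule lift_Suc_mono_le[of SS]) (auto simp: SS_Suc)

lemma SS_sum: "SS r = (\<Sum>i<r. ks i)"
  by (induction r) (auto simp: SS_0 SS_Suc)

lemma ks_run: "SS r \<le> p \<Longrightarrow> p < SS (Suc r) \<Longrightarrow> ks p = sy r"
proof -
  assume a: "SS r \<le> p" "p < SS (Suc r)"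
  then have "p < length (pre (Suc r))" by (simp add: SS_def)
  then have "ks p = pre (Suc r) ! p" by (rule ks_pre)
  also have "\<dots> = sy r" using a by (simp add: nth_append SS_def)
  finally show ?thesis .
qed

definition runidx :: "nat \<Rightarrow> nat" where "runidx p = (LEAST r. p < SS (Suc r))"

lemma runidx_bounds: "SS (runidx p) \<le> p \<and> p < SS (Suc (runidx p))"
proof -
  have ex: "p < SS (Suc p)" using SS_ge[of "Suc p"] by simp
  have up: "p < SS (Suc (runidx p))" unfolding runidx_def by (rule LeastI[of _ p], rule ex)
  have lo: "SS (runidx p) \<le> p"
  proof (cases "runidx p")
    case 0 then show ?thesis by (simp add: SS_0)
  next
    case (Suc r)
    have "\<not> p < SS (Suc r)"
    proof
      assume "p < SS (Suc r)"
      then have "runidx p \<le> r" unfolding runidx_def by (rule Least_le)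
      then show False using Suc by simp
    qed
    then show ?thesis using Suc by simp
  qed
  show ?thesis using up lo by simp
qed

lemma runidx_eq: "SS r \<le> p \<Longrightarrow> p < SS (Suc r) \<Longrightarrow> runidx p = r"
proof -
  assume a: "SS r \<le> p" "p < SS (Suc r)"
  have b: "SS (runidx p) \<le> p" "p < SS (Suc (runidx p))" using runidx_bounds by auto
  show ?thesis
  proof (rule ccontr)
    assume "runidx p \<noteq> r"
    then consider "r < runidx p" | "runidx p < r" by linarith
    then show False
    proof cases
      case 1 then have "SS (Suc r) \<le> SS (runidx p)" using SS_mono by simp
      then show False using a b by simp
    next
      case 2 then have "SS (Suc (runidx p)) \<le> SS r" using SS_mono by simp
      then show False using a b by simp
    qed
  qed
qed

lemma runidx_less: "1 \<le> p \<Longrightarrow> runidx p < p"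
proof -
  assume p: "1 \<le> p"
  show ?thesis
  proof (cases "runidx p = 0")
    case True then show ?thesis using p by simp
  next
    case False
    then have "runidx p + 1 \<le> SS (runidx p)" using SS_ge by simp
    then show ?thesis using runidx_bounds[of p] by simp
  qed
qed

lemma ks_sy: "ks p = sy (runidx p)"
  using runidx_bounds[of p] ks_run by blast

lemma runidx_0: "runidx 0 = 0" by (rule runidx_eq) (auto simp: SS_0 SS_1)
lemma runidx_1: "runidx (Suc 0) = 0" by (rule runidx_eq) (auto simp: SS_0 SS_1)
lemma ks_1: "ks (Suc 0) = 2" using ks_sy[of 1] by (simp add: runidx_1 sy_def)

definition word :: "nat \<Rightarrow> nat list" where
  "word p = replicate (SS (Suc (runidx p)) - p) (ks p)"

lemma word_ne: "word p \<noteq> []" using runidx_bounds[of p] by (simp add: word_def)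
lemma hd_word: "hd (word p) = ks p" using runidx_bounds[of p] by (simp add: word_def)
lemma word_0: "word 0 = [2,2]" by (simp add: word_def runidx_0 SS_1 ks_0 numeral_2_eq_2)
lemma word_1: "word (Suc 0) = [2]" by (simp add: word_def runidx_1 SS_1 ks_1)

lemma word_start: "word (SS r) = replicate (ks r) (sy r)"
proof -
  have r: "runidx (SS r) = r" by (rule runidx_eq) (auto simp: SS_Suc ks_pos)
  have "ks (SS r) = sy r" by (rule ks_run) (auto simp: SS_Suc ks_pos)
  then show ?thesis by (simp add: word_def r SS_Suc)
qed


lemma inf_concat_at:
  assumes "(\<Sum>i<j. length (R i)) \<le> m" "m < (\<Sum>i<Suc j. length (R i))"
  shows "inf_concat R m = R j ! (m - (\<Sum>i<j. length (R i)))"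
proof -
  have "(LEAST j. m < (\<Sum>i\<le>j. length (R i))) = j"
  proof (rule Least_equality)
    show "m < (\<Sum>i\<le>j. length (R i))" using assms(2) by (simp add: lessThan_Suc_atMost)
  next
    fix y assume y: "m < (\<Sum>i\<le>y. length (R i))"
    show "j \<le> y"
    proof (rule ccontr)
      assume "\<not> j \<le> y"
      then have "{..y} \<subseteq> {..<j}" by auto
      then have "(\<Sum>i\<le>y. length (R i)) \<le> (\<Sum>i<j. length (R i))" by (rule sum_mono2[OF finite_lessThan]) auto
      then show False using y assms(1) by simp
    qed
  qed
  then show ?thesis by (simp add: inf_concat_def Let_def)
qed

definition kolK :: "nat \<Rightarrow> nat" where "kolK n = (case n of 0 \<Rightarrow> 1 | Suc m \<Rightarrow> ks m)"

lemma ks_concat: "inf_concat (\<lambda>i. replicate (ks i) (sy i)) m = ks m"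
proof -
  let ?r = "runidx m"
  have b: "SS ?r \<le> m" "m < SS (Suc ?r)" using runidx_bounds by auto
  have "inf_concat (\<lambda>i. replicate (ks i) (sy i)) m = replicate (ks ?r) (sy ?r) ! (m - SS ?r)"
    using inf_concat_at[of "\<lambda>i. replicate (ks i) (sy i)" ?r m] b by (simp add: SS_sum)
  also have "\<dots> = sy ?r" using b by (simp add: SS_Suc)
  finally show ?thesis using ks_sy by simp
qed

lemma kolK_is: "is_kolakoski kolK"
  unfolding is_kolakoski_def
proof (intro conjI allI ext)
  show "kolK 0 = 1" by (simp add: kolK_def)
next
  fix n show "kolK n \<in> {1,2}" using ks_12 by (cases n) (auto simp: kolK_def)
next
  fix m
  let ?R = "\<lambda>i. replicate (kolK i) (if even i then 1 else 2) :: nat list"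
  have sh: "(\<Sum>i<Suc r. length (?R i)) = 1 + SS r" for r
    by (simp only: sum.lessThan_Suc_shift) (simp add: kolK_def SS_sum)
  show "inf_concat ?R m = kolK m"
  proof (cases m)
    case 0
    then show ?thesis using inf_concat_at[of ?R 0 m] by (simp add: kolK_def)
  next
    case (Suc m')
    let ?r = "runidx m'"
    have b: "SS ?r \<le> m'" "m' < SS (Suc ?r)" using runidx_bounds by auto
    have "inf_concat ?R m = ?R (Suc ?r) ! (m - (1 + SS ?r))"
      using inf_concat_at[of ?R "Suc ?r" m] b Suc sh[of ?r] sh[of "Suc ?r"] by simp
    also have "\<dots> = sy ?r" using b Suc by (simp add: SS_Suc kolK_def sy_def)
    finally show ?thesis using ks_sy Suc by (simp add: kolK_def)
  qed
qed

lemma kol_K1: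
  assumes "is_kolakoski K" shows "K 1 = 2"
proof -
  let ?R = "\<lambda>i. replicate (K i) (if even i then 1 else 2) :: nat list"
  have e: "inf_concat ?R = K" and k0: "K 0 = 1" and k12: "\<And>n. K n \<in> {1,2}"
    using assms by (auto simp: is_kolakoski_def)
  have "K 1 \<ge> 1" using k12[of 1] by auto
  then have "inf_concat ?R 1 = ?R 1 ! (1 - (\<Sum>i<1. length (?R i)))"
    using inf_concat_at[of ?R 1 1] k0 by simp
  also have "\<dots> = 2" using \<open>K 1 \<ge> 1\<close> k0 by simp
  finally show ?thesis using e by simp
qed

lemma find_run:
  fixes T :: "nat \<Rightarrow> nat"
  assumes "T 0 = 0" "m < T N" shows "\<exists>j<N. T j \<le> m \<and> m < T (Suc j)"
  using assms(2)
proof (induction N)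
  case 0 then show ?case using assms(1) by simp
next
  case (Suc N)
  show ?case
  proof (cases "m < T N")
    case True then show ?thesis using Suc by (meson less_SucI)
  next
    case False then show ?thesis using Suc by auto
  qed
qed

lemma kol_unique:
  assumes "is_kolakoski K" "is_kolakoski K2" shows "K = K2"
proof -
  have main: "\<forall>m<n. K m = K2 m" for n
  proof (induction n)
    case 0 then show ?case by simp
  next
    case (Suc n)
    have "K n = K2 n"
    proof -
      consider "n = 0" | "n = 1" | "n \<ge> 2" by linarith
      then show ?thesis
      proof cases
        case 1 then show ?thesis using assms by (simp add: is_kolakoski_def)
      next
        case 2 then show ?thesis using kol_K1[OF assms(1)] kol_K1[OF assms(2)] by simp
      next
        case 3
        let ?R = "\<lambda>K i. replicate (K i) (if even i then 1 else 2) :: nat list"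
        let ?T = "\<lambda>j. (\<Sum>i<j. length (?R K i))"
        have e1: "inf_concat (?R K) = K" and e2: "inf_concat (?R K2) = K2"
          using assms by (auto simp: is_kolakoski_def)
        have k12: "\<And>n. K n \<in> {1,2}" using assms by (auto simp: is_kolakoski_def)
        have k0: "K 0 = 1" using assms by (simp add: is_kolakoski_def)
        have k1: "K 1 = 2" using kol_K1[OF assms(1)] .
        have Tg: "q \<ge> 2 \<Longrightarrow> q < ?T q" for q
        proof (induction q rule: dec_induct[of 2])
          case base
          show ?case using k0 k1 by (simp add: numeral_2_eq_2)
        next
          case (step q)
          have "K q \<ge> 1" using k12[of q] by auto
          then show ?case using step by simp
        qed
        have "n < ?T n" using Tg 3 by simp
        then obtain j where j: "j < n" "?T j \<le> n" "n < ?T (Suc j)"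
          using find_run[of ?T n n] by auto
        have agree: "\<And>i. i \<le> j \<Longrightarrow> K i = K2 i" using Suc j(1) by auto
        have t1: "?T j = (\<Sum>i<j. length (?R K2 i))"
          by (rule sum.cong) (auto simp: agree)
        have t2: "?T (Suc j) = (\<Sum>i<Suc j. length (?R K2 i))"
          by (rule sum.cong) (auto simp: agree)
        have "K n = ?R K j ! (n - ?T j)"
          using inf_concat_at[of "?R K" j n] j e1 by simp
        also have "\<dots> = ?R K2 j ! (n - (\<Sum>i<j. length (?R K2 i)))"
          using agree[of j] t1 by simp
        also have "\<dots> = K2 n"
          using inf_concat_at[of "?R K2" j n] j t1 t2 e2 by simp
        finally show ?thesis .
      qed
    qed
    then show ?case using Suc by (auto simp: less_Suc_eq)
  qed
  show ?thesis
  proof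
    fix n show "K n = K2 n" using main[of "Suc n"] by simp
  qed
qed

lemma kol_eq: "kol = kolK"
  unfolding kol_def
proof (rule the_equality)
  show "is_kolakoski kolK" by (rule kolK_is)
next
  fix x assume "is_kolakoski x" then show "x = kolK" using kol_unique kolK_is by blast
qed


fun chain :: "nat \<Rightarrow> nat \<Rightarrow> nat" where
  "chain p 0 = p"
| "chain p (Suc i) = chain (runidx p) i"

lemma chain_0: "chain 0 i = 0" by (induction i) (auto simp: runidx_0)

definition good :: "nat \<Rightarrow> nat \<Rightarrow> pstate \<Rightarrow> bool" where
  "good k p P \<longleftrightarrow> (\<forall>i. P (k + i) = (if chain p i = 0 then None else Some (word (chain p i))))"

lemma good_shift: "good k p P \<Longrightarrow> good (Suc k) (runidx p) P"
  unfolding good_def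
proof
  fix i assume g: "\<forall>i. P (k + i) = (if chain p i = 0 then None else Some (word (chain p i)))"
  show "P (Suc k + i) = (if chain (runidx p) i = 0 then None else Some (word (chain (runidx p) i)))"
    using g[rule_format, of "Suc i"] by simp
qed

lemma flip_sy: "flip (sy r) = sy (Suc r)" by (simp add: flip_def sy_def)

lemma inc_step:
  "k \<ge> 1 \<Longrightarrow> good k p P \<Longrightarrow>
    (\<exists>P'. inc_rel k P P') \<and> (\<forall>P'. inc_rel k P P' \<longrightarrow> good k (Suc p) P' \<and> (\<forall>i<k. P' i = P i))"
proof (induction p arbitrary: k P rule: less_induct)
  case (less p)
  have Pk: "P k = (if p = 0 then None else Some (word p))"
  proof -
    have "P (k + 0) = (if chain p 0 = 0 then None else Some (word (chain p 0)))"
      using less.prems(2) unfolding good_def by blast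
    then show ?thesis by simp
  qed
  show ?case
  proof (cases "p = 0")
    case True
    then have Pk0: "P k = None" using Pk by simp
    have iss: "init_step k P = P(k := Some [2,2])" by (simp add: init_step_def Pk0)
    let ?P' = "P(k := Some [2,2], k := Some [hd [2,2::nat]])"
    have ex: "inc_rel k P ?P'"
      using inc_rel.stop[of "P(k := Some [2,2])" k P "[2,2]"] iss less.prems(1) by simp
    have all: "P' = P(k := Some [2])" if "inc_rel k P P'" for P'
      using that
    proof (cases)
      case (stop P1 w) then show ?thesis using iss by simp
    next
      case (recur P1 w P2 v) then show ?thesis using iss less.prems(1) by simp
    qed
    have gd: "good k (Suc p) (P(k := Some [2]))"
      unfolding good_def
    proof
      fix i show "(P(k := Some [2])) (k + i) = (if chain (Suc p) i = 0 then None else Some (word (chain (Suc p) i)))"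
      proof (cases i)
        case 0 then show ?thesis using True word_1 by simp
      next
        case (Suc i')
        have "P (k + i) = (if chain 0 i = 0 then None else Some (word (chain 0 i)))"
          using less.prems(2) True unfolding good_def by simp
        then show ?thesis using Suc True by (simp add: runidx_1 runidx_0 chain_0)
      qed
    qed
    have "\<forall>P'. inc_rel k P P' \<longrightarrow> good k (Suc p) P' \<and> (\<forall>i<k. P' i = P i)"
    proof (intro allI impI)
      fix P' assume "inc_rel k P P'"
      then have e: "P' = P(k := Some [2])" by (rule all)
      show "good k (Suc p) P' \<and> (\<forall>i<k. P' i = P i)" using gd e by simp
    qed
    then show ?thesis using ex by blast
  next
    case False
    then have Pk1: "P k = Some (word p)" using Pk by simp
    have iss: "init_step k P = P" by (simp add: init_step_def Pk1)
    let ?r = "runidx p"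
    have b: "SS ?r \<le> p" "p < SS (Suc ?r)" using runidx_bounds by auto
    have lw: "length (word p) = SS (Suc ?r) - p" by (simp add: word_def)
    have ksr: "ks ?r \<le> 2" by (rule ks_le2)
    have hw: "hd (word p) = sy ?r" using hd_word ks_sy by simp
    show ?thesis
    proof (cases "length (word p) = 2")
      case True
      let ?P' = "P(k := Some [hd (word p)])"
      have ex: "inc_rel k P ?P'"
        using inc_rel.stop[of P k P "word p"] iss less.prems(1) True Pk1 by simp
      have all: "P' = ?P'" if "inc_rel k P P'" for P'
        using that
      proof (cases)
        case (stop P1 w) then show ?thesis using iss Pk1 by simp
      next
        case (recur P1 w P2 v) then show ?thesis using iss less.prems(1) True Pk1 by simp
      qed
      have b2: "Suc p < SS (Suc ?r)" using True lw by simp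
      have ri: "runidx (Suc p) = ?r" by (rule runidx_eq) (use b b2 in auto)
      have d1: "SS (Suc ?r) - Suc p = 1" using True lw by simp
      have w2: "word (Suc p) = [hd (word p)]"
        using d1 ri hw ks_sy[of "Suc p"] by (simp add: word_def)
      have gd: "good k (Suc p) ?P'"
        unfolding good_def
      proof
        fix i show "?P' (k + i) = (if chain (Suc p) i = 0 then None else Some (word (chain (Suc p) i)))"
        proof (cases i)
          case 0 then show ?thesis using w2 by simp
        next
          case (Suc i')
          have "P (k + i) = (if chain p i = 0 then None else Some (word (chain p i)))"
            using less.prems(2) unfolding good_def by simp
          then show ?thesis using Suc ri by simp
        qed
      qed
      have "\<forall>P'. inc_rel k P P' \<longrightarrow> good k (Suc p) P' \<and> (\<forall>i<k. P' i = P i)"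
      proof (intro allI impI)
        fix P' assume "inc_rel k P P'"
        then have e: "P' = ?P'" by (rule all)
        show "good k (Suc p) P' \<and> (\<forall>i<k. P' i = P i)" using gd e by simp
      qed
      then show ?thesis using ex by blast
    next
      case F2: False
      have l1: "SS (Suc ?r) = Suc p" using F2 lw b ksr by (simp add: SS_Suc) 
      have rl: "?r < p" using runidx_less False by simp
      have gs: "good (Suc k) ?r P" using good_shift less.prems(2) .
      note IH = less.IH[OF rl, of "Suc k" P, OF _ gs]
      obtain P2 where P2: "inc_rel (Suc k) P P2" using IH by auto
      have P2g: "good (Suc k) (Suc ?r) Q \<and> (\<forall>i<Suc k. Q i = P i)" if "inc_rel (Suc k) P Q" for Q
        using IH that by auto
      have P2k: "Q (Suc k) = Some (word (Suc ?r))" if "inc_rel (Suc k) P Q" for Q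
      proof -
        have "Q (Suc k + 0) = (if chain (Suc ?r) 0 = 0 then None else Some (word (chain (Suc ?r) 0)))"
          using P2g[OF that] unfolding good_def by blast
        then show ?thesis by simp
      qed
      let ?new = "replicate (ks (Suc ?r)) (sy (Suc ?r))"
      have wSp: "word (Suc p) = ?new" using word_start[of "Suc ?r"] l1 by simp
      have newv: "replicate (hd (word (Suc ?r))) (flip (hd (word p))) = ?new"
        using hw flip_sy hd_word by simp
      have ex: "inc_rel k P (P2(k := Some ?new))"
        using inc_rel.recur[of P k P "word p" P2 "word (Suc ?r)"] iss less.prems(1) F2 P2 P2k[OF P2] newv Pk1 hw flip_sy
        by simp
      have all: "good k (Suc p) P' \<and> (\<forall>i<k. P' i = P i)" if "inc_rel k P P'" for P'
        using that
      proof (cases)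
        case (stop P1 w) then show ?thesis using iss less.prems(1) F2 Pk1 by simp
      next
        case (recur P1 w Q v)
        have Qr: "inc_rel (Suc k) P Q" using recur iss by simp
        have v: "v = word (Suc ?r)" using recur P2k[OF Qr] by simp
        have w: "w = word p" using recur iss Pk1 by simp
        have P'e: "P' = Q(k := Some ?new)" using recur v w newv iss Pk1 hw flip_sy by simp
        have gQ: "good (Suc k) (Suc ?r) Q" and aQ: "\<forall>i<Suc k. Q i = P i" using P2g[OF Qr] by auto
        have ri: "runidx (Suc p) = Suc ?r"
          by (rule runidx_eq) (use l1 ks_pos[of "Suc ?r"] in \<open>simp_all add: SS_Suc\<close>)
        have gd: "good k (Suc p) P'"
          unfolding good_def
        proof
          fix i show "P' (k + i) = (if chain (Suc p) i = 0 then None else Some (word (chain (Suc p) i)))"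
          proof (cases i)
            case 0 then show ?thesis using P'e wSp by simp
          next
            case (Suc i')
            have "Q (Suc k + i') = (if chain (Suc ?r) i' = 0 then None else Some (word (chain (Suc ?r) i')))"
              using gQ unfolding good_def by simp
            then show ?thesis using Suc ri P'e by simp
          qed
        qed
        then show ?thesis using aQ P'e by simp
      qed
      have "\<forall>P'. inc_rel k P P' \<longrightarrow> good k (Suc p) P' \<and> (\<forall>i<k. P' i = P i)"
        using all by blast
      then show ?thesis using ex by blast
    qed
  qed
qed


definition Inv :: "nat \<Rightarrow> pstate \<Rightarrow> bool" where
  "Inv j P \<longleftrightarrow> P 0 = Some (replicate (ks j) (sy j)) \<and> good 1 j P"

lemma inc0:
  assumes "Inv j P"
  shows "(\<exists>P'. inc_rel 0 P P') \<and> (\<forall>P'. inc_rel 0 P P' \<longrightarrow> Inv (Suc j) P')"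
proof -
  have P0: "P 0 = Some (replicate (ks j) (sy j))" and g: "good 1 j P" using assms by (auto simp: Inv_def)
  have iss: "init_step 0 P = P" by (simp add: init_step_def P0)
  note IH = inc_step[OF _ g]
  obtain P2 where P2: "inc_rel 1 P P2" using IH by auto
  have P2g: "good 1 (Suc j) Q \<and> (\<forall>i<1. Q i = P i)" if "inc_rel 1 P Q" for Q
    using IH that by auto
  have P2k: "Q 1 = Some (word (Suc j))" if "inc_rel 1 P Q" for Q
  proof -
    have "Q (1 + 0) = (if chain (Suc j) 0 = 0 then None else Some (word (chain (Suc j) 0)))"
      using P2g[OF that] unfolding good_def by blast
    then show ?thesis by simp
  qed
  let ?new = "replicate (ks (Suc j)) (sy (Suc j))"
  have hw: "hd (replicate (ks j) (sy j)) = sy j" using ks_pos[of j] by simp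
  have newv: "replicate (hd (word (Suc j))) (flip (hd (replicate (ks j) (sy j)))) = ?new"
    using hw flip_sy hd_word by simp
  have ex: "inc_rel 0 P (P2(0 := Some ?new))"
    using inc_rel.recur[of P 0 P "replicate (ks j) (sy j)" P2 "word (Suc j)"] iss P2 P2k[OF P2] newv P0
    by simp
  have all: "Inv (Suc j) P'" if "inc_rel 0 P P'" for P'
    using that
  proof (cases)
    case (stop P1 w) then show ?thesis by simp
  next
    case (recur P1 w Q v)
    have Qr: "inc_rel 1 P Q" using recur iss by simp
    have v: "v = word (Suc j)" using recur P2k[OF Qr] by simp
    have w: "w = replicate (ks j) (sy j)" using recur iss P0 by simp
    have P'e: "P' = Q(0 := Some ?new)" using recur v w newv iss P0 hw flip_sy by simp
    have gQ: "good 1 (Suc j) Q" using P2g[OF Qr] by auto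
    have "good 1 (Suc j) P'"
      using gQ P'e unfolding good_def by simp
    then show ?thesis using P'e by (simp add: Inv_def)
  qed
  have "\<forall>P'. inc_rel 0 P P' \<longrightarrow> Inv (Suc j) P'" using all by blast
  then show ?thesis using ex by blast
qed

lemma Inv_init: "Inv 0 P_init"
  unfolding Inv_def good_def P_init_def
  by (simp add: chain_0 ks_0 sy_def numeral_2_eq_2)

primrec stf :: "nat \<Rightarrow> pstate" where
  "stf 0 = P_init"
| "stf (Suc j) = (SOME P'. inc_rel 0 (stf j) P')"

lemma stf_props: "Inv j (stf j) \<and> inc_rel 0 (stf j) (stf (Suc j))"
proof (induction j)
  case 0
  have "\<exists>P'. inc_rel 0 (stf 0) P'" using inc0[OF Inv_init] by simp
  then show ?case using Inv_init by (simp add: someI_ex)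
next
  case (Suc j)
  have I: "Inv (Suc j) (stf (Suc j))" using inc0 Suc by blast
  then have "\<exists>P'. inc_rel 0 (stf (Suc j)) P'" using inc0 by blast
  then have "inc_rel 0 (stf (Suc j)) (stf (Suc (Suc j)))" by (simp del: stf.simps(2) add: someI_ex stf.simps(2)[of "Suc j"])
  then show ?case using I by simp
qed

lemma run_Inv: "is_run st \<Longrightarrow> Inv j (st j)"
proof (induction j)
  case 0 then show ?case using Inv_init by (simp add: is_run_def)
next
  case (Suc j) then show ?case using inc0 by (auto simp: is_run_def)
qed

theorem mainTheorem3:
  shows "(\<exists>st. is_run st) \<and>
    (\<forall>st. is_run st \<longrightarrow>
       (let R = (\<lambda>j. if j = 0 then [2, 2] else the (st j 0))
        in (\<forall>j. R j \<noteq> []) \<and> inf_concat R = (\<lambda>m. kol (Suc m))))"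
proof (intro conjI allI impI)
  have "is_run stf" unfolding is_run_def by (metis stf.simps(1) stf_props)
  then show "\<exists>st. is_run st" by blast
next
  fix st assume r: "is_run st"
  let ?R = "\<lambda>j. if j = 0 then [2, 2] else the (st j 0) :: nat list"
  have Re: "?R = (\<lambda>i. replicate (ks i) (sy i))"
  proof
    fix j show "?R j = replicate (ks j) (sy j)"
      using run_Inv[OF r, of j] by (cases "j = 0") (auto simp: Inv_def ks_0 sy_def numeral_2_eq_2)
  qed
  have ne: "\<forall>j. ?R j \<noteq> []"
  proof
    fix j
    have "?R j = replicate (ks j) (sy j)" using fun_cong[OF Re, of j] by simp
    then show "?R j \<noteq> []" using ks_pos[of j] by simp
  qed
  have ic: "inf_concat ?R = (\<lambda>m. kol (Suc m))"
    unfolding Re kol_eq by (rule ext) (simp add: ks_concat kolK_def)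
  show "let R = ?R in (\<forall>j. R j \<noteq> []) \<and> inf_concat R = (\<lambda>m. kol (Suc m))"
    using ne ic by (simp add: Let_def)
qed

end
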